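(* Let $\epsilon \in (0,\exp(-2))$, let $G$ be an abelian group, and let $A \subset G$ be a non-empty finite distributional $\epsilon$-approximate group. Then \[\Delta \mathbb{H}(A) \le 2\epsilon \log (\epsilon^{-1}|A|).\]
   Context: $\log$ is the natural logarithm. For a random variable $X$ with finite range $R$ (the set of values taken with positive probability), its Shannon entropy is $\mathbb{H}(X) = -\sum_{x\in R}\mathbb{P}(X=x)\log \mathbb{P}(X=x)$. For a non-empty finite set $A$, $U_A$ denotes a random variable uniformly distributed on $A$. In expressions such as $U_A+U_A$ the two summands are independent copies. For a non-empty finite subset $A$ of an abelian group, $\Delta\mathbb{H}(A) := \mathbb{H}(U_A+U_A) - \mathbb{H}(U_A)$. Definition: for $\epsilon>0$, an abelian group $G$ and a non-empty finite subset $A$ of $G$, $A$ is a distributional $\epsilon$-approximate group of $G$ if there exists a subset $U \subset G$ with $|U| = |A|$ such that the proportion of pairs $(a,b) \in A \times A$ with $a+b \in U$ is at least $1-\epsilon$. *)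

theory Defs
  imports "HOL-Probability.Probability"
begin

definition shannon_entropy :: "'a pmf \<Rightarrow> real" where
  "shannon_entropy p = - (\<Sum>x\<in>set_pmf p. pmf p x * ln (pmf p x))"

definition unif :: "'a set \<Rightarrow> 'a pmf" where
  "unif A = pmf_of_set A"

definition sum_unif :: "'a::ab_group_add set \<Rightarrow> 'a pmf" where
  "sum_unif A = map_pmf (\<lambda>(x, y). x + y) (pair_pmf (unif A) (unif A))"

definition doubling_entropy :: "'a::ab_group_add set \<Rightarrow> real" where
  "doubling_entropy A = shannon_entropy (sum_unif A) - shannon_entropy (unif A)"

definition distributional_approx_group :: "real \<Rightarrow> 'a::ab_group_add set \<Rightarrow> bool" where
  "distributional_approx_group \<epsilon> A \<longleftrightarrow>
     finite A \<and> A \<noteq> {} \<and>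
     (\<exists>U. card U = card A \<and> finite U \<and>
        real (card {(a, b) \<in> A \<times> A. a + b \<in> U}) \<ge> (1 - \<epsilon>) * real (card (A \<times> A)))"

end

theory Submission imports Defs begin

lemma pair_unif:
  assumes "finite A" "A \<noteq> {}"
  shows "pair_pmf (pmf_of_set A) (pmf_of_set A) = pmf_of_set (A \<times> A)"
proof (rule pmf_eqI)
  fix z :: "'a \<times> 'a"
  show "pmf (pair_pmf (pmf_of_set A) (pmf_of_set A)) z = pmf (pmf_of_set (A \<times> A)) z"
    using assms by (cases z) (auto simp: pmf_pair indicator_def card_cartesian_product)
qed

lemma ent_bound:
  fixes p :: "'b \<Rightarrow> real"
  assumes T: "finite T" and nn: "\<And>x. x \<in> T \<Longrightarrow> p x \<ge> 0" and N: "real (card T) \<le> N" "N \<ge> 1"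
  shows "- (\<Sum>x\<in>T. p x * ln (p x)) \<le> (\<Sum>x\<in>T. p x) * ln N - (\<Sum>x\<in>T. p x) * ln (\<Sum>x\<in>T. p x)"
proof (cases "(\<Sum>x\<in>T. p x) = 0")
  case True
  then have "\<forall>x\<in>T. p x = 0" using sum_nonneg_eq_0_iff[OF T] nn by blast
  then show ?thesis by simp
next
  case False
  define s where "s = (\<Sum>x\<in>T. p x)"
  have s0: "s > 0" using False nn sum_nonneg[of T p] unfolding s_def by force
  have key: "p x * ln s - p x * ln N - p x * ln (p x) \<le> s / N - p x" if x: "x \<in> T" for x
  proof (cases "p x = 0")
    case True then show ?thesis using s0 N by simp
  next
    case False
    then have px: "p x > 0" using nn x by force
    have "ln (s / (N * p x)) \<le> s / (N * p x) - 1"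
      by (rule ln_le_minus_one) (use s0 px N in simp)
    moreover have "ln (s / (N * p x)) = ln s - ln N - ln (p x)"
      using s0 px N by (simp add: ln_div ln_mult)
    ultimately have "ln s - ln N - ln (p x) \<le> s / (N * p x) - 1" by simp
    then have "p x * (ln s - ln N - ln (p x)) \<le> p x * (s / (N * p x) - 1)"
      using px by (simp add: mult_left_mono)
    also have "\<dots> = s / N - p x" using px N by (simp add: field_simps)
    finally show ?thesis by (simp add: algebra_simps)
  qed
  have "(\<Sum>x\<in>T. p x * ln s - p x * ln N - p x * ln (p x)) \<le> (\<Sum>x\<in>T. s / N - p x)"
    by (rule sum_mono) (rule key)
  also have "\<dots> = card T * s / N - s" by (simp add: sum_subtractf s_def)
  also have "\<dots> \<le> 0"
  proof -
    have "card T * s / N \<le> N * s / N" using N s0 by (intro divide_right_mono mult_right_mono) auto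
    then show ?thesis using N by simp
  qed
  finally show ?thesis
    by (simp add: sum_subtractf sum.distrib sum_distrib_left[symmetric] sum_distrib_right[symmetric] s_def algebra_simps)
qed

lemma L1: fixes t :: real assumes "0 \<le> t" "t < 1" shows "- ((1 - t) * ln (1 - t)) \<le> t"
proof -
  have "ln (1 / (1 - t)) \<le> 1 / (1 - t) - 1" by (rule ln_le_minus_one) (use assms in simp)
  then have "- ln (1 - t) \<le> t / (1 - t)" using assms by (simp add: ln_div field_simps)
  then have "(1 - t) * (- ln (1 - t)) \<le> (1 - t) * (t / (1 - t))" using assms by (intro mult_left_mono) auto
  then show ?thesis using assms by simp
qed

lemma L2: fixes t e :: real assumes "0 \<le> t" "0 < e" shows "- (t * ln t) \<le> - t * ln e - t + e"
proof (cases "t = 0")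
  case True then show ?thesis using assms by simp
next
  case False
  then have t: "t > 0" using assms by simp
  have "ln (e / t) \<le> e / t - 1" by (rule ln_le_minus_one) (use assms t in simp)
  then have "t * ln (e / t) \<le> t * (e / t - 1)" using t by (intro mult_left_mono) auto
  also have "t * (e / t - 1) = e - t" using t by (simp add: field_simps)
  finally have "t * (ln e - ln t) \<le> e - t" using t assms by (simp add: ln_div)
  then show ?thesis by (simp add: algebra_simps)
qed

theorem mainTheorem2:
  fixes \<epsilon> :: real and A :: "'a::ab_group_add set"
  assumes "0 < \<epsilon>" and "\<epsilon> < exp (-2)"
    and "finite A" and "A \<noteq> {}"
    and "distributional_approx_group \<epsilon> A"
  shows "doubling_entropy A \<le> 2 * \<epsilon> * ln (real (card A) / \<epsilon>)"
proof -
  note fin = assms(3) and ne = assms(4)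
  obtain U where Uc: "card U = card A" and Uf: "finite U"
    and Ucnt: "real (card {(a, b) \<in> A \<times> A. a + b \<in> U}) \<ge> (1 - \<epsilon>) * real (card (A \<times> A))"
    using assms(5) unfolding distributional_approx_group_def by blast
  define n where "n = card A"
  have n1: "real n \<ge> 1" using fin ne unfolding n_def by (simp add: Suc_leI card_gt_0_iff)
  define f where "f = (\<lambda>(x::'a, y). x + y)"
  define p where "p = sum_unif A"
  have p_eq: "p = map_pmf f (pmf_of_set (A \<times> A))"
    unfolding p_def sum_unif_def unif_def f_def using pair_unif[OF fin ne] by simp
  define S where "S = set_pmf p"
  have S_eq: "S = f ` (A \<times> A)" unfolding S_def p_eq using fin ne by simp
  have Sf: "finite S" using S_eq fin by simp
  have cardS: "real (card S) \<le> real n ^ 2"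
  proof -
    have "card S \<le> card (A \<times> A)" unfolding S_eq by (rule card_image_le) (use fin in simp)
    then show ?thesis by (simp add: card_cartesian_product n_def power2_eq_square flip: of_nat_mult)
  qed
  define w where "w = pmf p"
  have w0: "\<And>z. w z \<ge> 0" unfolding w_def by simp
  define s1 where "s1 = (\<Sum>z\<in>S \<inter> U. w z)"
  define s2 where "s2 = (\<Sum>z\<in>S - U. w z)"
  have s12: "s1 + s2 = 1"
  proof -
    have "s1 + s2 = (\<Sum>z\<in>S. w z)" unfolding s1_def s2_def
      using Sf by (metis sum.Int_Diff)
    also have "\<dots> = 1" unfolding w_def S_def by (rule sum_pmf_eq_1) (use Sf S_def in auto)
    finally show ?thesis .
  qed
  have s1_prob: "s1 = measure_pmf.prob p U"
  proof -
    have "measure_pmf.prob p U = (\<Sum>z\<in>U. w z)" unfolding w_def by (rule measure_measure_pmf_finite[OF Uf])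
    also have "\<dots> = (\<Sum>z\<in>S \<inter> U. w z)"
      by (rule sum.mono_neutral_right) (use Uf in \<open>auto simp: w_def S_def set_pmf_eq\<close>)
    finally show ?thesis unfolding s1_def by simp
  qed
  have prob: "measure_pmf.prob p U = real (card {(a, b) \<in> A \<times> A. a + b \<in> U}) / real (card (A \<times> A))"
  proof -
    have "(A \<times> A) \<inter> f -` U = {(a, b) \<in> A \<times> A. a + b \<in> U}" unfolding f_def by auto
    then show ?thesis unfolding p_eq using fin ne by (simp add: measure_pmf_of_set)
  qed
  have cAA: "real (card (A \<times> A)) > 0" using fin ne by (simp add: card_gt_0_iff)
  have s1ge: "s1 \<ge> 1 - \<epsilon>" using Ucnt cAA unfolding s1_prob prob by (simp add: field_simps)
  have s2le: "s2 \<le> \<epsilon>" using s1ge s12 by simp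
  have s2ge: "s2 \<ge> 0" unfolding s2_def by (rule sum_nonneg) (use w0 in auto)
  have s2lt: "s2 < 1" using s2le assms(1,2) exp_less_one_iff[of "-2::real"] by linarith
  have HU: "shannon_entropy (unif A) = ln n"
  proof -
    have "shannon_entropy (unif A) = - (\<Sum>x\<in>A. (1 / n) * ln (1 / n))"
      unfolding shannon_entropy_def unif_def using fin ne by (simp add: n_def)
    also have "\<dots> = ln n" using n1 by (simp add: n_def ln_div)
    finally show ?thesis .
  qed
  have Hp: "shannon_entropy p = - (\<Sum>z\<in>S \<inter> U. w z * ln (w z)) - (\<Sum>z\<in>S - U. w z * ln (w z))"
  proof -
    have "(\<Sum>z\<in>S. w z * ln (w z)) = (\<Sum>z\<in>S \<inter> U. w z * ln (w z)) + (\<Sum>z\<in>S - U. w z * ln (w z))"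
      using Sf by (metis sum.Int_Diff)
    then show ?thesis unfolding shannon_entropy_def S_def w_def by simp
  qed
  have B1: "- (\<Sum>z\<in>S \<inter> U. w z * ln (w z)) \<le> s1 * ln n - s1 * ln s1"
    unfolding s1_def
  proof (rule ent_bound)
    show "real (card (S \<inter> U)) \<le> real n"
      using card_mono[OF Uf, of "S \<inter> U"] Uc by (simp add: n_def)
  qed (use Sf w0 n1 in auto)
  have B2: "- (\<Sum>z\<in>S - U. w z * ln (w z)) \<le> s2 * ln (real n ^ 2) - s2 * ln s2"
    unfolding s2_def
  proof (rule ent_bound)
    show "real (card (S - U)) \<le> real n ^ 2"
      using card_mono[OF Sf, of "S - U"] cardS by (meson Diff_subset of_nat_le_iff order_trans)
    show "1 \<le> real n ^ 2" using n1 by (simp add: one_le_power)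
  qed (use Sf w0 in auto)
  have lnn: "ln (real n) \<ge> 0" using n1 by simp
  have lne: "ln \<epsilon> < -2" using assms(1,2) by (metis ln_less_cancel_iff ln_exp exp_gt_zero)
  have ln2: "ln (real n ^ 2) = 2 * ln n" using n1 by (simp add: ln_realpow)
  have s1e: "s1 = 1 - s2" using s12 by simp
  have l1: "- (s1 * ln s1) \<le> s2" using L1[OF s2ge s2lt] unfolding s1e .
  have l2: "- (s2 * ln s2) \<le> - s2 * ln \<epsilon> - s2 + \<epsilon>" by (rule L2[OF s2ge assms(1)])
  have m1: "s2 * ln n \<le> \<epsilon> * ln n" using s2le lnn by (rule mult_right_mono)
  have m2: "s2 * (- ln \<epsilon>) \<le> \<epsilon> * (- ln \<epsilon>)" using s2le lne by (intro mult_right_mono) auto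
  have m3: "\<epsilon> * 1 \<le> \<epsilon> * (ln n - ln \<epsilon>)" using assms(1) lne lnn by (intro mult_left_mono) auto
  have goalr: "2 * \<epsilon> * ln (real (card A) / \<epsilon>) = 2 * \<epsilon> * (ln n - ln \<epsilon>)"
    using n1 assms(1) by (simp add: n_def ln_div)
  have "doubling_entropy A = shannon_entropy p - ln n"
    unfolding doubling_entropy_def p_def[symmetric] HU ..
  also have "\<dots> \<le> s1 * ln n - s1 * ln s1 + s2 * (2 * ln n) - s2 * ln s2 - ln n"
    using Hp B1 B2[unfolded ln2] by linarith
  also have "\<dots> \<le> 2 * \<epsilon> * (ln n - ln \<epsilon>)"
  proof -
    have "s1 * ln n + s2 * (2 * ln n) - ln n = s2 * ln n"
      using s12 by (simp add: algebra_simps) (metis add_diff_cancel_left' distrib_right mult_1 s12)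
    then show ?thesis using l1 l2 m1 m2 m3 by (simp add: algebra_simps)
  qed
  finally show ?thesis unfolding goalr .
qed

end
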